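(* Let $(X,d)$ be a metric space and let $F$ be a semiflow on $X$ with strong compact dynamics. Then: (1) $\mathcal R_{\mathcal C}=\mathcal R_{\mathcal S}$; denote this common set by $\mathcal R$. (2) For all $x,y\in\mathcal R$, one has $x\succcurlyeq_{\mathcal C} y$ if and only if $x\succcurlyeq_{\mathcal S} y$. (3) A set $M\subset X$ is a Conley node if and only if it is a shadow node. (4) The graphs coincide: $\Gamma_{\mathcal C}=\Gamma_{\mathcal S}$.
   Context: A semiflow on a metric space $(X,d)$ is a continuous map $F:[0,\infty)\times X\to X$, $(t,x)\mapsto F^t(x)$, with $F^0=\mathrm{id}$ and $F^{t+s}=F^t\circ F^s$ for all $t,s\ge 0$. A curve is piecewise continuous if it is continuous except at finitely many points, at which one-sided limits exist. Conley chains: for $\varepsilon>0$, $T>0$, an $(\varepsilon,T)$-chain from $x$ to $y$ is a finite sequence $x=x_0,x_1,\dots,x_N=y$ in $X$ with times $t_i\ge T$ such that $d(F^{t_i}(x_i),x_{i+1})<\varepsilon$ for $i=0,\dots,N-1$. Write $x\succcurlyeq_{\mathcal C} y$ if for every $\varepsilon>0$ and $T>0$ there is an $(\varepsilon,T)$-chain from $x$ to $y$. Shadow chains: for $T\ge1$, a piecewise continuous curve $\gamma:[0,T]\to X$ is $\varepsilon$-close to $F$ if $d(\gamma(t+\tau),F^\tau(\gamma(t)))<\varepsilon$ for every $\tau\in[0,1]$ and $t\in[0,T-\tau]$. An $\varepsilon$-chain (shadow chain) from $x$ to $y$ is a piecewise continuous $\gamma:[0,T]\to X$, $T\ge 1$,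 with $\gamma(0)=x$, $\gamma(T)=y$, $\gamma$ $\varepsilon$-close to $F$. Write $x\succcurlyeq_{\mathcal S} y$ if for every $\varepsilon>0$ there is an $\varepsilon$-chain from $x$ to $y$. For $\star\in\{\mathcal C,\mathcal S\}$: a point $x$ is $\star$-chain-recurrent if either $x$ is a fixed point of $F$ or there is $y\in X$ with $x\succcurlyeq_\star y$ and $y\succcurlyeq_\star x$ (such $x,y$ are called $\star$-chain-equivalent); $\mathcal R_\star$ is the set of $\star$-chain-recurrent points. A $\star$-node (Conley node for $\mathcal C$, shadow node for $\mathcal S$) is a maximal subset of $\mathcal R_\star$ whose points are mutually $\star$-chain-equivalent. $\Gamma_\star$ is the directed graph whose vertices are the $\star$-nodes, with an edge from node $M$ to node $N$ iff there are $x\in M$, $y\in N$ with $x\succcurlyeq_\star y$. Compact dynamics: for $G\subset X$, $N_\varepsilon(G)=\{y: d(y,G)<\varepsilon\}$ and $W_\varepsilon(G)=\bigcup_{t\ge0}F^t(N_\varepsilon(G))$. A set $G$ attracts $K$ if for every $\varepsilon>0$ there is $T>0$ with $F^t(K)\subset N_\varepsilon(G)$ for all $t\ge T$. The global attractor $\mathcal G$ of $F$, if it exists, is a maximal invariant compact subset of $X$ attracting every compact $K\subset X$. It is strong if there is $\varepsilon>0$ such that $\mathcal G$ attracts $N_\varepsilon(\mathcal G)$ and the map $(t,z)\mapsto F^t(z)$ is uniformly continuous on $[0,1]\times W_\varepsilon(\mathcal G)$. $F$ has strong compact dynamics if it has a strong global attractor. *)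

theory Defs
  imports "HOL-Analysis.Analysis"
begin

definition semiflow :: "(real \<Rightarrow> 'a::metric_space \<Rightarrow> 'a) \<Rightarrow> bool" where
  "semiflow F \<longleftrightarrow>
     continuous_on ({0..} \<times> UNIV) (\<lambda>(t, x). F t x) \<and>
     (\<forall>x. F 0 x = x) \<and>
     (\<forall>t s x. t \<ge> 0 \<longrightarrow> s \<ge> 0 \<longrightarrow> F (t + s) x = F t (F s x))"

definition piecewise_continuous :: "real \<Rightarrow> (real \<Rightarrow> 'a::metric_space) \<Rightarrow> bool" where
  "piecewise_continuous T \<gamma> \<longleftrightarrow>
     (\<exists>S. finite S \<and>
        (\<forall>t\<in>{0..T} - S. continuous (at t within {0..T}) \<gamma>) \<and>
        (\<forall>s\<in>S \<inter> {0..T}.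
           (0 < s \<longrightarrow> (\<exists>l. (\<gamma> \<longlongrightarrow> l) (at_left s))) \<and>
           (s < T \<longrightarrow> (\<exists>l. (\<gamma> \<longlongrightarrow> l) (at_right s)))))"

definition conley_chain ::
  "(real \<Rightarrow> 'a::metric_space \<Rightarrow> 'a) \<Rightarrow> real \<Rightarrow> real \<Rightarrow> 'a \<Rightarrow> 'a \<Rightarrow> bool" where
  "conley_chain F \<epsilon> T x y \<longleftrightarrow>
     (\<exists>N::nat. \<exists>xs::nat \<Rightarrow> 'a. \<exists>ts::nat \<Rightarrow> real.
        N \<ge> 1 \<and> xs 0 = x \<and> xs N = y \<and>
        (\<forall>i<N. ts i \<ge> T \<and> dist (F (ts i) (xs i)) (xs (Suc i)) < \<epsilon>))"

definition conley_le :: "(real \<Rightarrow> 'a::metric_space \<Rightarrow> 'a) \<Rightarrow> 'a \<Rightarrow> 'a \<Rightarrow> bool" where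
  "conley_le F x y \<longleftrightarrow> (\<forall>\<epsilon>>0. \<forall>T>0. conley_chain F \<epsilon> T x y)"

definition eps_close :: "(real \<Rightarrow> 'a::metric_space \<Rightarrow> 'a) \<Rightarrow> real \<Rightarrow> real \<Rightarrow> (real \<Rightarrow> 'a) \<Rightarrow> bool" where
  "eps_close F \<epsilon> T \<gamma> \<longleftrightarrow>
     (\<forall>\<tau>\<in>{0..1}. \<forall>t\<in>{0..T - \<tau>}. dist (\<gamma> (t + \<tau>)) (F \<tau> (\<gamma> t)) < \<epsilon>)"

definition shadow_chain :: "(real \<Rightarrow> 'a::metric_space \<Rightarrow> 'a) \<Rightarrow> real \<Rightarrow> 'a \<Rightarrow> 'a \<Rightarrow> bool" where
  "shadow_chain F \<epsilon> x y \<longleftrightarrow>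
     (\<exists>T \<gamma>. T \<ge> 1 \<and> piecewise_continuous T \<gamma> \<and> \<gamma> 0 = x \<and> \<gamma> T = y \<and> eps_close F \<epsilon> T \<gamma>)"

definition shadow_le :: "(real \<Rightarrow> 'a::metric_space \<Rightarrow> 'a) \<Rightarrow> 'a \<Rightarrow> 'a \<Rightarrow> bool" where
  "shadow_le F x y \<longleftrightarrow> (\<forall>\<epsilon>>0. shadow_chain F \<epsilon> x y)"

definition fixed_point :: "(real \<Rightarrow> 'a \<Rightarrow> 'a) \<Rightarrow> 'a \<Rightarrow> bool" where
  "fixed_point F x \<longleftrightarrow> (\<forall>t\<ge>0. F t x = x)"

definition chain_recurrent_set :: "(real \<Rightarrow> 'a \<Rightarrow> 'a) \<Rightarrow> ('a \<Rightarrow> 'a \<Rightarrow> bool) \<Rightarrow> 'a set" where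
  "chain_recurrent_set F rel = {x. fixed_point F x \<or> (\<exists>y. rel x y \<and> rel y x)}"

definition mutually_equiv :: "('a \<Rightarrow> 'a \<Rightarrow> bool) \<Rightarrow> 'a set \<Rightarrow> bool" where
  "mutually_equiv rel M \<longleftrightarrow> (\<forall>x\<in>M. \<forall>y\<in>M. rel x y \<and> rel y x)"

definition is_node :: "(real \<Rightarrow> 'a \<Rightarrow> 'a) \<Rightarrow> ('a \<Rightarrow> 'a \<Rightarrow> bool) \<Rightarrow> 'a set \<Rightarrow> bool" where
  "is_node F rel M \<longleftrightarrow>
     M \<noteq> {} \<and> M \<subseteq> chain_recurrent_set F rel \<and> mutually_equiv rel M \<and>
     (\<forall>M'. M \<subseteq> M' \<and> M' \<subseteq> chain_recurrent_set F rel \<and> mutually_equiv rel M' \<longrightarrow> M' = M)"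

definition chain_graph :: "(real \<Rightarrow> 'a \<Rightarrow> 'a) \<Rightarrow> ('a \<Rightarrow> 'a \<Rightarrow> bool) \<Rightarrow> 'a set set \<times> ('a set \<times> 'a set) set" where
  "chain_graph F rel =
     ({M. is_node F rel M},
      {(M, N). is_node F rel M \<and> is_node F rel N \<and> (\<exists>x\<in>M. \<exists>y\<in>N. rel x y)})"

definition nbhd :: "real \<Rightarrow> 'a::metric_space set \<Rightarrow> 'a set" where
  "nbhd \<epsilon> G = {y. \<exists>g\<in>G. dist y g < \<epsilon>}"

definition W_set :: "(real \<Rightarrow> 'a::metric_space \<Rightarrow> 'a) \<Rightarrow> real \<Rightarrow> 'a set \<Rightarrow> 'a set" where
  "W_set F \<epsilon> G = (\<Union>t\<in>{0..}. F t ` nbhd \<epsilon> G)"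

definition attracts :: "(real \<Rightarrow> 'a::metric_space \<Rightarrow> 'a) \<Rightarrow> 'a set \<Rightarrow> 'a set \<Rightarrow> bool" where
  "attracts F G K \<longleftrightarrow> (\<forall>\<epsilon>>0. \<exists>T>0. \<forall>t\<ge>T. F t ` K \<subseteq> nbhd \<epsilon> G)"

definition invariant :: "(real \<Rightarrow> 'a \<Rightarrow> 'a) \<Rightarrow> 'a set \<Rightarrow> bool" where
  "invariant F G \<longleftrightarrow> (\<forall>t\<ge>0. F t ` G = G)"

definition global_attractor :: "(real \<Rightarrow> 'a::metric_space \<Rightarrow> 'a) \<Rightarrow> 'a set \<Rightarrow> bool" where
  "global_attractor F G \<longleftrightarrow>
     invariant F G \<and> compact G \<and>
     (\<forall>K. invariant F K \<and> compact K \<and> G \<subseteq> K \<longrightarrow> K = G) \<and>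
     (\<forall>K. compact K \<longrightarrow> attracts F G K)"

definition strong_global_attractor :: "(real \<Rightarrow> 'a::metric_space \<Rightarrow> 'a) \<Rightarrow> 'a set \<Rightarrow> bool" where
  "strong_global_attractor F G \<longleftrightarrow>
     global_attractor F G \<and>
     (\<exists>\<epsilon>>0. attracts F G (nbhd \<epsilon> G) \<and>
        uniformly_continuous_on ({0..1} \<times> W_set F \<epsilon> G) (\<lambda>(t, z). F t z))"

definition strong_compact_dynamics :: "(real \<Rightarrow> 'a::metric_space \<Rightarrow> 'a) \<Rightarrow> bool" where
  "strong_compact_dynamics F \<longleftrightarrow> (\<exists>G. strong_global_attractor F G)"

end

theory Submission
  imports Defs
begin

definition dchain :: "(real \<Rightarrow> 'a::metric_space \<Rightarrow> 'a) \<Rightarrow> real \<Rightarrow> 'a \<Rightarrow> 'a \<Rightarrow> nat \<Rightarrow> bool" where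
  "dchain F \<epsilon> x y L \<longleftrightarrow> (\<exists>n p s. n \<ge> 1 \<and> L \<le> n \<and> p 0 = x \<and> p n = y \<and>
     (\<forall>i<n. s i \<in> {1/2..1} \<and> dist (F (s i) (p i)) (p (Suc i)) < \<epsilon>))"

lemma dchain_mono: "dchain F \<epsilon> x y L \<Longrightarrow> L' \<le> L \<Longrightarrow> dchain F \<epsilon> x y L'"
  unfolding dchain_def using order_trans by blast

lemma dchain_concat:
  assumes "dchain F \<epsilon> x y L1" "dchain F \<epsilon> y z L2"
  shows "dchain F \<epsilon> x z (L1 + L2)"
proof -
  obtain n1 p1 s1 where 1: "n1 \<ge> 1" "L1 \<le> n1" "p1 0 = x" "p1 n1 = y"
    "\<forall>i<n1. s1 i \<in> {1/2..1} \<and> dist (F (s1 i) (p1 i)) (p1 (Suc i)) < \<epsilon>"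
    using assms(1) unfolding dchain_def by blast
  obtain n2 p2 s2 where 2: "n2 \<ge> 1" "L2 \<le> n2" "p2 0 = y" "p2 n2 = z"
    "\<forall>i<n2. s2 i \<in> {1/2..1} \<and> dist (F (s2 i) (p2 i)) (p2 (Suc i)) < \<epsilon>"
    using assms(2) unfolding dchain_def by blast
  define p where "p i = (if i \<le> n1 then p1 i else p2 (i - n1))" for i
  define s where "s i = (if i < n1 then s1 i else s2 (i - n1))" for i
  have "\<forall>i<n1+n2. s i \<in> {1/2..1} \<and> dist (F (s i) (p i)) (p (Suc i)) < \<epsilon>"
  proof (intro allI impI)
    fix i assume i: "i < n1 + n2"
    show "s i \<in> {1/2..1} \<and> dist (F (s i) (p i)) (p (Suc i)) < \<epsilon>"
    proof (cases "i < n1")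
      case True then show ?thesis using 1 unfolding p_def s_def by auto
    next
      case False
      then have "p i = p2 (i - n1)" using 1(4) 2(3) unfolding p_def by auto
      moreover have "p (Suc i) = p2 (Suc (i - n1))" using False unfolding p_def by (simp add: Suc_diff_le)
      moreover have "s i = s2 (i - n1)" using False unfolding s_def by simp
      moreover have "i - n1 < n2" using i False by simp
      ultimately show ?thesis using 2(5) by auto
    qed
  qed
  moreover have "p (n1 + n2) = z" using 2(1,4) unfolding p_def by auto
  moreover have "p 0 = x" using 1(3) unfolding p_def by simp
  ultimately show ?thesis unfolding dchain_def using 1 2
    by (intro exI[of _ "n1 + n2"] exI[of _ p] exI[of _ s]) auto
qed

lemma dchain_loop: "dchain F \<epsilon> x x 1 \<Longrightarrow> dchain F \<epsilon> x x k"
proof (induction k)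
  case 0 then show ?case using dchain_mono by blast
next
  case (Suc k)
  then have "dchain F \<epsilon> x x (k + 1)" using dchain_concat by blast
  then show ?case by simp
qed

locale sf =
  fixes F :: "real \<Rightarrow> 'a::metric_space \<Rightarrow> 'a"
  assumes semi: "semiflow F"
begin

lemma F0[simp]: "F 0 x = x"
  using semi unfolding semiflow_def by auto

lemma Fadd: "t \<ge> 0 \<Longrightarrow> s \<ge> 0 \<Longrightarrow> F (t + s) x = F t (F s x)"
  using semi unfolding semiflow_def by auto

lemma contF: "continuous_on ({0..} \<times> UNIV) (\<lambda>(t, x). F t x)"
  using semi unfolding semiflow_def by auto

lemma cont_t: "continuous_on {0..} (\<lambda>t. F t x)"
proof -
  have "continuous_on {0..} ((\<lambda>(t, x). F t x) \<circ> (\<lambda>t. (t, x)))"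
    by (rule continuous_on_compose) (auto intro!: continuous_intros continuous_on_subset[OF contF])
  then show ?thesis by (simp add: o_def)
qed

lemma contF_at: "t \<ge> 0 \<Longrightarrow> continuous (at (t,x) within ({0..} \<times> UNIV)) (\<lambda>(t, x). F t x)"
  using contF continuous_on_eq_continuous_within by blast


lemma conley_to_shadow:
  fixes xs :: "nat \<Rightarrow> 'a" and ts :: "nat \<Rightarrow> real"
  assumes N: "N \<ge> 1" and ts1: "\<And>i. i < N \<Longrightarrow> ts i \<ge> 1"
    and close: "\<And>i r. i < N \<Longrightarrow> 0 \<le> r \<Longrightarrow> r \<le> 1 \<Longrightarrow>
        dist (F r (xs (Suc i))) (F r (F (ts i) (xs i))) < \<epsilon>"
  shows "shadow_chain F \<epsilon> (xs 0) (xs N)"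
proof -
  define c where "c i = (\<Sum>k<i. ts k)" for i
  have c0: "c 0 = 0" unfolding c_def by simp
  have cS: "c (Suc i) = c i + ts i" for i unfolding c_def by simp
  have cmono: "c i + real (j - i) \<le> c j" if "j \<le> N" "i \<le> j" for i j
    using that
  proof (induction j)
    case 0 then show ?case by simp
  next
    case (Suc j)
    show ?case
    proof (cases "i = Suc j")
      case True then show ?thesis by simp
    next
      case False
      then have "i \<le> j" using Suc.prems by simp
      then have "c i + real (j - i) \<le> c j" using Suc by simp
      moreover have "ts j \<ge> 1" using ts1 Suc.prems by simp
      moreover have "real (Suc j - i) = real (j - i) + 1" using \<open>i \<le> j\<close> by simp
      ultimately show ?thesis using cS[of j] by linarith
    qed
  qed
  have cnn: "0 \<le> c i" if "i \<le> N" for i using cmono[of i 0] that c0 by simp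
  define P where "P t i \<longleftrightarrow> i \<le> N \<and> c i \<le> t" for t i
  define idx where "idx t = (GREATEST i. P t i)" for t
  have idx_prop: "P t (idx t) \<and> (idx t < N \<longrightarrow> t < c (Suc (idx t)))" if "0 \<le> t" for t
  proof -
    have P0: "P t 0" unfolding P_def using c0 that by simp
    have bnd: "\<And>y. P t y \<Longrightarrow> y \<le> N" unfolding P_def by simp
    have "P t (idx t)" unfolding idx_def by (rule GreatestI_nat[where P="P t", OF P0 bnd])
    moreover have "t < c (Suc (idx t))" if "idx t < N"
    proof (rule ccontr)
      assume "\<not> t < c (Suc (idx t))"
      then have "P t (Suc (idx t))" unfolding P_def using that by simp
      then have "Suc (idx t) \<le> idx t" unfolding idx_def by (rule Greatest_le_nat[where P="P t", OF _ bnd])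
      then show False by simp
    qed
    ultimately show ?thesis by blast
  qed
  have idx_eq: "idx t = i" if "i \<le> N" "c i \<le> t" "i < N \<Longrightarrow> t < c (Suc i)" for i t
    unfolding idx_def
  proof (rule Greatest_equality)
    show "P t i" unfolding P_def using that by simp
    fix y assume "P t y"
    show "y \<le> i"
    proof (rule ccontr)
      assume "\<not> y \<le> i"
      then have "i < N" "Suc i \<le> y" "y \<le> N" using \<open>P t y\<close> unfolding P_def by auto
      then have "c (Suc i) \<le> c y" using cmono[of y "Suc i"] by simp
      then show False using that(3)[OF \<open>i < N\<close>] \<open>P t y\<close> unfolding P_def by simp
    qed
  qed
  define \<gamma> where "\<gamma> t = F (t - c (idx t)) (xs (idx t))" for t
  have \<gamma>_seg: "\<gamma> t = F (t - c i) (xs i)" if "i \<le> N" "c i \<le> t" "i < N \<Longrightarrow> t < c (Suc i)" for i t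
    unfolding \<gamma>_def using idx_eq[OF that] by simp
  have T1: "c N \<ge> 1" using cmono[of N 0] c0 N by simp
  have g0: "\<gamma> 0 = xs 0"
    using \<gamma>_seg[of 0 0] c0 cS[of 0] ts1[of 0] N by simp
  have gN: "\<gamma> (c N) = xs N" using \<gamma>_seg[of N "c N"] by simp
  have epos: "\<epsilon> > 0"
  proof -
    have "dist (F 0 (xs (Suc 0))) (F 0 (F (ts 0) (xs 0))) < \<epsilon>" using close[of 0 0] N by simp
    then show ?thesis by (rule le_less_trans[OF zero_le_dist])
  qed
  have close_ok: "eps_close F \<epsilon> (c N) \<gamma>"
    unfolding eps_close_def
  proof (intro ballI)
    fix \<tau> t assume \<tau>: "\<tau> \<in> {0..1::real}" and t: "t \<in> {0..c N - \<tau>}"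
    define i where "i = idx t"
    have ip: "i \<le> N" "c i \<le> t" "i < N \<Longrightarrow> t < c (Suc i)"
      using idx_prop[of t] t unfolding i_def P_def by auto
    show "dist (\<gamma> (t + \<tau>)) (F \<tau> (\<gamma> t)) < \<epsilon>"
    proof (cases "i < N")
      case False
      then have "i = N" using ip by simp
      then have "\<tau> = 0" using ip t \<tau> by auto
      then show ?thesis using epos by simp
    next
      case True
      have gt: "\<gamma> t = F (t - c i) (xs i)" using \<gamma>_seg[OF ip] .
      show ?thesis
      proof (cases "t + \<tau> < c (Suc i)")
        case True
        have "\<gamma> (t + \<tau>) = F (t + \<tau> - c i) (xs i)" using \<gamma>_seg[of i "t + \<tau>"] ip \<tau> True by auto
        also have "\<dots> = F \<tau> (F (t - c i) (xs i))" using Fadd[of \<tau> "t - c i"] \<tau> ip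
          by (simp add: algebra_simps)
        finally show ?thesis using gt epos by simp
      next
        case False
        define j where "j = Suc i"
        have jN: "j \<le> N" using \<open>i < N\<close> unfolding j_def by simp
        have tsi: "ts i \<ge> 1" using ts1 \<open>i < N\<close> by simp
        have cj: "c j = c i + ts i" unfolding j_def by (rule cS)
        have tj: "t < c j" using ip(3) \<open>i < N\<close> unfolding j_def by simp
        have "\<gamma> (t + \<tau>) = F (t + \<tau> - c j) (xs j)"
        proof (rule \<gamma>_seg)
          show "j \<le> N" by fact
          show "c j \<le> t + \<tau>" using False unfolding j_def by simp
          assume "j < N"
          then have "ts j \<ge> 1" using ts1 by simp
          then show "t + \<tau> < c (Suc j)" using cS[of j] tj \<tau> by simp
        qed
        moreover have "F \<tau> (\<gamma> t) = F (t + \<tau> - c j) (F (ts i) (xs i))"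
        proof -
          have "F \<tau> (\<gamma> t) = F (\<tau> + (t - c i)) (xs i)" using gt Fadd[of \<tau> "t - c i"] \<tau> ip by simp
          also have "\<tau> + (t - c i) = (t + \<tau> - c j) + ts i" using cj by simp
          also have "F \<dots> (xs i) = F (t + \<tau> - c j) (F (ts i) (xs i))"
            using Fadd[of "t + \<tau> - c j" "ts i"] False tsi unfolding j_def by simp
          finally show ?thesis .
        qed
        ultimately show ?thesis using close[of i "t + \<tau> - c j"] \<open>i < N\<close> False tj \<tau>
          unfolding j_def by simp
      qed
    qed
  qed
  have gcont: "continuous_on {c i..} (\<lambda>u. F (u - c i) (xs i))" for i
    by (rule continuous_on_compose2[OF cont_t[of "xs i"]]) (auto intro!: continuous_intros)
  have gcont': "isCont (\<lambda>u. F (u - c i) (xs i)) u" if "u > c i" for i u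
  proof -
    have "continuous_on {c i<..} (\<lambda>u. F (u - c i) (xs i))"
      using gcont[of i] by (rule continuous_on_subset) auto
    then show ?thesis using continuous_on_eq_continuous_at[of "{c i<..}"] that by auto
  qed
  have pc: "piecewise_continuous (c N) \<gamma>"
    unfolding piecewise_continuous_def
  proof (intro exI[of _ "c ` {..N}"] conjI ballI impI)
    show "finite (c ` {..N})" by simp
  next
    fix t assume t: "t \<in> {0..c N} - c ` {..N}"
    define i where "i = idx t"
    have ip: "i \<le> N" "c i \<le> t" "i < N \<Longrightarrow> t < c (Suc i)"
      using idx_prop[of t] t unfolding i_def P_def by auto
    have "c i \<noteq> t" using t ip by auto
    then have lt: "c i < t" using ip by simp
    have iN: "i < N"
    proof (rule ccontr)
      assume "\<not> i < N"
      then have "i = N" using ip by simp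
      then show False using t ip by auto
    qed
    have "((\<lambda>u. F (u - c i) (xs i)) \<longlongrightarrow> F (t - c i) (xs i)) (at t within {0..c N})"
      using gcont'[OF lt] unfolding isCont_def by (rule tendsto_within_subset) auto
    then have "(\<gamma> \<longlongrightarrow> F (t - c i) (xs i)) (at t within {0..c N})"
    proof (rule Lim_transform_within_open[where s="{c i<..<c (Suc i)}"])
      show "open {c i<..<c (Suc i)}" by simp
      show "t \<in> {c i<..<c (Suc i)}" using lt ip iN by simp
      fix x assume "x \<in> {c i<..<c (Suc i)}"
      then show "F (x - c i) (xs i) = \<gamma> x" using \<gamma>_seg[of i x] iN by simp
    qed
    moreover have "\<gamma> t = F (t - c i) (xs i)" using \<gamma>_seg[OF ip] .
    ultimately show "continuous (at t within {0..c N}) \<gamma>" unfolding continuous_within by simp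
  next
    fix s assume s: "s \<in> c ` {..N} \<inter> {0..c N}"
    then obtain j where j: "j \<le> N" "s = c j" by auto
    show "\<exists>l. (\<gamma> \<longlongrightarrow> l) (at_left s)" if spos: "0 < s"
    proof -
      obtain i where i: "j = Suc i" using spos j c0 by (cases j) auto
      have tsi: "ts i \<ge> 1" using ts1 i j by simp
      have lt: "c i < c j" using cS[of i] tsi i by simp
      have "((\<lambda>u. F (u - c i) (xs i)) \<longlongrightarrow> F (c j - c i) (xs i)) (at_left (c j))"
        using gcont'[OF lt] unfolding isCont_def by (rule tendsto_within_subset) auto
      moreover have "eventually (\<lambda>u. F (u - c i) (xs i) = \<gamma> u) (at_left (c j))"
        using eventually_at_left_real[OF lt]
        by (rule eventually_mono) (use \<gamma>_seg[of i] i j in auto)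
      ultimately show ?thesis using j(2) Lim_transform_eventually by blast
    qed
    show "\<exists>l. (\<gamma> \<longlongrightarrow> l) (at_right s)" if sN: "s < c N"
    proof -
      have jN: "j < N" using sN j by (cases "j = N") auto
      have tsj: "ts j \<ge> 1" using ts1 jN by simp
      have lt: "c j < c (Suc j)" using cS[of j] tsj by simp
      have "((\<lambda>u. F (u - c j) (xs j)) \<longlongrightarrow> F (c j - c j) (xs j)) (at (c j) within {c j..})"
        using gcont[of j] unfolding continuous_on_def by (metis atLeast_iff order_refl)
      then have "((\<lambda>u. F (u - c j) (xs j)) \<longlongrightarrow> F (c j - c j) (xs j)) (at_right (c j))"
        by (rule tendsto_within_subset) auto
      moreover have "eventually (\<lambda>u. F (u - c j) (xs j) = \<gamma> u) (at_right (c j))"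
        using eventually_at_right_real[OF lt]
        by (rule eventually_mono) (use \<gamma>_seg[of j] jN in auto)
      ultimately show ?thesis using j(2) Lim_transform_eventually by blast
    qed
  qed
  show ?thesis unfolding shadow_chain_def
    using T1 pc g0 gN close_ok by blast
qed


lemma UCK: assumes K: "compact K" and eta: "\<eta> > 0"
  shows "\<exists>\<delta>>0. \<forall>a\<in>{0..1}. \<forall>p\<in>K. \<forall>z. dist z p < \<delta> \<longrightarrow> dist (F a z) (F a p) < \<eta>"
proof -
  let ?f = "\<lambda>(t, x). F t x"
  let ?S = "{0..1::real} \<times> K"
  have ex: "\<forall>q\<in>?S. \<exists>r. r > 0 \<and> (\<forall>q'\<in>{0..}\<times>UNIV. dist q' q < r \<longrightarrow> dist (?f q') (?f q) < \<eta>/2)"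
  proof
    fix q assume qS: "q \<in> ?S"
    obtain t x where q: "q = (t, x)" "t \<ge> 0" using qS by auto
    have "continuous (at q within ({0..} \<times> UNIV)) ?f" using contF_at[of t x] q by simp
    then have "\<forall>e>0. \<exists>d>0. \<forall>x'\<in>{0..}\<times>UNIV. dist x' q < d \<longrightarrow> dist (?f x') (?f q) < e"
      unfolding continuous_within_eps_delta by blast
    moreover have "\<eta>/2 > 0" using eta by simp
    ultimately show "\<exists>r. r > 0 \<and> (\<forall>q'\<in>{0..}\<times>UNIV. dist q' q < r \<longrightarrow> dist (?f q') (?f q) < \<eta>/2)"
      by blast
  qed
  obtain r where r0: "\<forall>q\<in>?S. r q > 0 \<and> (\<forall>q'\<in>{0..}\<times>UNIV. dist q' q < r q \<longrightarrow> dist (?f q') (?f q) < \<eta>/2)"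
    using bchoice[OF ex] by blast
  have r: "\<And>q. q \<in> ?S \<Longrightarrow> r q > 0"
    "\<And>q q'. q \<in> ?S \<Longrightarrow> q' \<in> {0..}\<times>UNIV \<Longrightarrow> dist q' q < r q \<Longrightarrow> dist (?f q') (?f q) < \<eta>/2"
    using r0 by auto
  have cS: "compact ?S" using K by (simp add: compact_Times)
  have cov: "?S \<subseteq> \<Union>((\<lambda>q. ball q (r q)) ` ?S)" using r(1) by force
  have opn: "\<And>B. B \<in> (\<lambda>q. ball q (r q)) ` ?S \<Longrightarrow> open B" by auto
  obtain e where e: "e > 0" "\<And>q. q \<in> ?S \<Longrightarrow> \<exists>B \<in> (\<lambda>q. ball q (r q)) ` ?S. ball q e \<subseteq> B"
    using Heine_Borel_lemma[OF cS cov opn] by blast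
  show ?thesis
  proof (intro exI[of _ e] conjI ballI allI impI)
    fix a p z assume a: "a \<in> {0..1::real}" and p: "p \<in> K" and z: "dist z p < e"
    obtain q' where q': "q' \<in> ?S" "ball (a, p) e \<subseteq> ball q' (r q')" using e(2)[of "(a,p)"] a p by auto
    have "(a, z) \<in> ball (a, p) e" using z by (simp add: dist_Pair_Pair dist_commute)
    moreover have "(a, p) \<in> ball (a, p) e" using e by simp
    ultimately have "(a, z) \<in> ball q' (r q')" "(a, p) \<in> ball q' (r q')" using q'(2) by (meson subsetD)+
    then have d1: "dist (a, z) q' < r q'" "dist (a, p) q' < r q'" by (auto simp: dist_commute)
    have "dist (F a z) (?f q') < \<eta>/2" using r(2)[OF q'(1), of "(a,z)"] d1 a by auto
    moreover have "dist (F a p) (?f q') < \<eta>/2" using r(2)[OF q'(1), of "(a,p)"] d1 a by auto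
    ultimately show "dist (F a z) (F a p) < \<eta>"
      using dist_triangle_half_l by blast
  qed (use e in auto)
qed

lemma track:
  assumes md: "\<And>\<tau>. \<tau> > 0 \<Longrightarrow> \<exists>\<delta>>0. \<forall>a\<in>{0..1}. \<forall>z w. A z \<longrightarrow> B w \<longrightarrow> dist z w < \<delta> \<longrightarrow> dist (F a z) (F a w) < \<tau>"
  shows "\<tau> > 0 \<Longrightarrow> \<exists>\<delta>>0. \<forall>p s. (\<forall>i<m. s i \<in> {0..1} \<and> dist (F (s i) (p i)) (p (Suc i)) < \<delta> \<and>
      A (p i) \<and> B (F (\<Sum>k<i. s k) (p 0))) \<longrightarrow> dist (p m) (F (\<Sum>k<m. s k) (p 0)) < \<tau>"
proof (induction m arbitrary: \<tau>)
  case 0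
  then show ?case by (intro exI[of _ 1]) auto
next
  case (Suc m)
  have t2: "\<tau>/2 > 0" using Suc.prems by simp
  obtain \<delta>1 where d1: "\<delta>1 > 0" "\<forall>a\<in>{0..1}. \<forall>z w. A z \<longrightarrow> B w \<longrightarrow> dist z w < \<delta>1 \<longrightarrow> dist (F a z) (F a w) < \<tau>/2"
    using md[OF t2] by blast
  obtain \<delta>2 where d2: "\<delta>2 > 0" "\<forall>p s. (\<forall>i<m. s i \<in> {0..1} \<and> dist (F (s i) (p i)) (p (Suc i)) < \<delta>2 \<and>
      A (p i) \<and> B (F (\<Sum>k<i. s k) (p 0))) \<longrightarrow> dist (p m) (F (\<Sum>k<m. s k) (p 0)) < \<delta>1"
    using Suc.IH[OF d1(1)] by blast
  show ?case
  proof (intro exI[of _ "min \<delta>2 (\<tau>/2)"] conjI allI impI)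
    show "min \<delta>2 (\<tau>/2) > 0" using d2 t2 by simp
    fix p s assume h: "\<forall>i<Suc m. s i \<in> {0..1} \<and> dist (F (s i) (p i)) (p (Suc i)) < min \<delta>2 (\<tau>/2) \<and>
      A (p i) \<and> B (F (\<Sum>k<i. s k) (p 0))"
    have "dist (p m) (F (\<Sum>k<m. s k) (p 0)) < \<delta>1" using d2(2) h by auto
    moreover have "s m \<in> {0..1}" "A (p m)" "B (F (\<Sum>k<m. s k) (p 0))" using h by auto
    ultimately have a: "dist (F (s m) (p m)) (F (s m) (F (\<Sum>k<m. s k) (p 0))) < \<tau>/2"
      using d1(2) by blast
    have nn: "(\<Sum>k<m. s k) \<ge> 0" using h by (intro sum_nonneg) auto
    have eq: "F (\<Sum>k<Suc m. s k) (p 0) = F (s m) (F (\<Sum>k<m. s k) (p 0))"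
      using Fadd[of "s m" "\<Sum>k<m. s k"] nn h by (simp add: add.commute)
    have b: "dist (F (s m) (p m)) (p (Suc m)) < \<tau>/2" using h by auto
    show "dist (p (Suc m)) (F (\<Sum>k<Suc m. s k) (p 0)) < \<tau>"
      unfolding eq using a b dist_triangle_half_l by (metis dist_commute)
  qed
qed

lemma track_le:
  assumes md: "\<And>\<tau>. \<tau> > 0 \<Longrightarrow> \<exists>\<delta>>0. \<forall>a\<in>{0..1}. \<forall>z w. A z \<longrightarrow> B w \<longrightarrow> dist z w < \<delta> \<longrightarrow> dist (F a z) (F a w) < \<tau>"
  shows "\<tau> > 0 \<Longrightarrow> \<exists>\<delta>>0. \<forall>m\<le>M. \<forall>p s. (\<forall>i<m. s i \<in> {0..1} \<and> dist (F (s i) (p i)) (p (Suc i)) < \<delta> \<and>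
      A (p i) \<and> B (F (\<Sum>k<i. s k) (p 0))) \<longrightarrow> dist (p m) (F (\<Sum>k<m. s k) (p 0)) < \<tau>"
proof (induction M)
  case 0
  then obtain \<delta> where "\<delta> > 0" "\<forall>p s. (\<forall>i<0. s i \<in> {0..1} \<and> dist (F (s i) (p i)) (p (Suc i)) < \<delta> \<and>
      A (p i) \<and> B (F (\<Sum>k<i. s k) (p 0))) \<longrightarrow> dist (p 0) (F (\<Sum>k<0. s k) (p 0)) < \<tau>"
    using track[OF md, of \<tau> 0] by blast
  then show ?case by (intro exI[of _ \<delta>]) auto
next
  case (Suc M)
  obtain \<delta>1 where d1: "\<delta>1 > 0" "\<forall>m\<le>M. \<forall>p s. (\<forall>i<m. s i \<in> {0..1} \<and> dist (F (s i) (p i)) (p (Suc i)) < \<delta>1 \<and>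
      A (p i) \<and> B (F (\<Sum>k<i. s k) (p 0))) \<longrightarrow> dist (p m) (F (\<Sum>k<m. s k) (p 0)) < \<tau>"
    using Suc by blast
  obtain \<delta>2 where d2: "\<delta>2 > 0" "\<forall>p s. (\<forall>i<Suc M. s i \<in> {0..1} \<and> dist (F (s i) (p i)) (p (Suc i)) < \<delta>2 \<and>
      A (p i) \<and> B (F (\<Sum>k<i. s k) (p 0))) \<longrightarrow> dist (p (Suc M)) (F (\<Sum>k<Suc M. s k) (p 0)) < \<tau>"
    using track[OF md, of \<tau> "Suc M"] Suc.prems by blast
  show ?case
  proof (intro exI[of _ "min \<delta>1 \<delta>2"] conjI allI impI)
    show "min \<delta>1 \<delta>2 > 0" using d1 d2 by simp
    fix m p s assume m: "m \<le> Suc M" and h: "\<forall>i<m. s i \<in> {0..1} \<and> dist (F (s i) (p i)) (p (Suc i)) < min \<delta>1 \<delta>2 \<and>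
      A (p i) \<and> B (F (\<Sum>k<i. s k) (p 0))"
    show "dist (p m) (F (\<Sum>k<m. s k) (p 0)) < \<tau>"
    proof (cases "m = Suc M")
      case True then show ?thesis using d2(2) h by auto
    next
      case False then have "m \<le> M" using m by simp
      then show ?thesis using d1(2) h by auto
    qed
  qed
qed


lemma shadow_dchain: assumes "shadow_chain F \<epsilon> x y" shows "dchain F \<epsilon> x y 1"
proof -
  obtain T \<gamma> where g: "T \<ge> 1" "\<gamma> 0 = x" "\<gamma> T = y" "eps_close F \<epsilon> T \<gamma>"
    using assms unfolding shadow_chain_def by blast
  define n where "n = nat \<lceil>T\<rceil>"
  have cT: "of_int \<lceil>T\<rceil> - 1 < T" "T \<le> of_int \<lceil>T\<rceil>" using ceiling_correct[of T] by auto
  have "real n = of_int \<lceil>T\<rceil>" unfolding n_def using cT g(1) by (intro of_nat_nat) linarith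
  then have nT: "T \<le> real n" "real n < T + 1" using cT by linarith+
  have n1: "n \<ge> 1" using nT g(1) by simp
  have npos: "real n > 0" using n1 by simp
  define h where "h = T / real n"
  have h1: "h \<le> 1" unfolding h_def using nT npos by simp
  have h2: "1/2 \<le> h" unfolding h_def using nT npos g(1) by (simp add: le_divide_eq)
  have h3: "h > 0" unfolding h_def using npos g(1) by simp
  note h = h1 h2 h3
  have nh: "real n * h = T" unfolding h_def using n1 by simp
  define p where "p i = \<gamma> (real i * h)" for i
  have "\<forall>i<n. h \<in> {1/2..1} \<and> dist (F h (p i)) (p (Suc i)) < \<epsilon>"
  proof (intro allI impI)
    fix i assume i: "i < n"
    have "real (Suc i) * h \<le> real n * h" using i h by (intro mult_right_mono) auto
    then have "real i * h \<in> {0..T - h}" using nh h by (auto simp: algebra_simps)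
    moreover have "h \<in> {0..1}" using h by auto
    ultimately have "dist (\<gamma> (real i * h + h)) (F h (\<gamma> (real i * h))) < \<epsilon>"
      using g(4) unfolding eps_close_def by blast
    moreover have "real i * h + h = real (Suc i) * h" by (simp add: algebra_simps)
    ultimately show "h \<in> {1/2..1} \<and> dist (F h (p i)) (p (Suc i)) < \<epsilon>"
      using h unfolding p_def by (simp add: dist_commute)
  qed
  moreover have "p 0 = x" "p n = y" unfolding p_def using g nh by auto
  ultimately show ?thesis unfolding dchain_def using n1
    by (intro exI[of _ n] exI[of _ p] exI[of _ "\<lambda>_. h"]) auto
qed

lemma RS_loop: assumes "x \<in> chain_recurrent_set F (shadow_le F)" "\<epsilon> > 0"
  shows "dchain F \<epsilon> x x 1"
proof (cases "fixed_point F x")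
  case True
  then have "F 1 x = x" unfolding fixed_point_def by simp
  show ?thesis unfolding dchain_def
  proof (intro exI[of _ "1::nat"] exI[of _ "\<lambda>_. x"] exI[of _ "\<lambda>_. 1::real"] conjI allI impI)
    fix i :: nat assume "i < 1"
    show "dist (F 1 x) x < \<epsilon>" using \<open>F 1 x = x\<close> assms(2) by simp
  qed auto
next
  case False
  then obtain y where "shadow_le F x y" "shadow_le F y x" using assms(1) unfolding chain_recurrent_set_def by blast
  then have "shadow_chain F \<epsilon> x y" "shadow_chain F \<epsilon> y x" using assms(2) unfolding shadow_le_def by auto
  then have "dchain F \<epsilon> x y 1" "dchain F \<epsilon> y x 1" using shadow_dchain by auto
  then have "dchain F \<epsilon> x x (1 + 1)" by (rule dchain_concat)
  then show ?thesis using dchain_mono[of F \<epsilon> x x "1+1" 1] by linarith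
qed

lemma RS_long: assumes "x \<in> chain_recurrent_set F (shadow_le F)" "shadow_le F x y" "\<epsilon> > 0"
  shows "dchain F \<epsilon> x y L"
proof -
  have "dchain F \<epsilon> x x L" using RS_loop[OF assms(1,3)] dchain_loop by blast
  moreover have "shadow_chain F \<epsilon> x y" using assms(2,3) unfolding shadow_le_def by auto
  then have "dchain F \<epsilon> x y 1" by (rule shadow_dchain)
  ultimately have "dchain F \<epsilon> x y (L + 1)" by (rule dchain_concat)
  then show ?thesis using dchain_mono[of F \<epsilon> x y "L+1" L] by simp
qed

end

locale sca = sf F for F :: "real \<Rightarrow> 'a::metric_space \<Rightarrow> 'a" +
  fixes G :: "'a set" and e0 :: real
  assumes ga: "global_attractor F G"
    and e0pos: "e0 > 0"
    and att0: "attracts F G (nbhd e0 G)"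
    and uc0: "uniformly_continuous_on ({0..1} \<times> W_set F e0 G) (\<lambda>(t, z). F t z)"
begin

abbreviation "W \<equiv> W_set F e0 G"

lemma Ginv: "t \<ge> 0 \<Longrightarrow> g \<in> G \<Longrightarrow> F t g \<in> G"
  using ga unfolding global_attractor_def invariant_def by blast

lemma Gcompact: "compact G"
  using ga unfolding global_attractor_def by blast

lemma G_nbhd: "e > 0 \<Longrightarrow> G \<subseteq> nbhd e G"
  unfolding nbhd_def by force

lemma nbhd_mono: "e \<le> e' \<Longrightarrow> nbhd e A \<subseteq> nbhd e' A"
  unfolding nbhd_def by force

lemma nbhd_W: "nbhd e0 G \<subseteq> W"
  unfolding W_set_def by (force)

lemma nbhd_W': "e \<le> e0 \<Longrightarrow> z \<in> nbhd e G \<Longrightarrow> z \<in> W"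
  using nbhd_mono nbhd_W by blast

lemma W_fwd: "z \<in> W \<Longrightarrow> t \<ge> 0 \<Longrightarrow> F t z \<in> W"
proof -
  assume "z \<in> W" "t \<ge> 0"
  then obtain s w where "s \<ge> 0" "w \<in> nbhd e0 G" "z = F s w" unfolding W_set_def by auto
  then have "F t z = F (t + s) w" using Fadd \<open>t \<ge> 0\<close> by simp
  then show ?thesis unfolding W_set_def using \<open>s \<ge> 0\<close> \<open>t \<ge> 0\<close> \<open>w \<in> nbhd e0 G\<close>
    by (auto intro!: bexI[of _ "t + s"])
qed

lemma UC: "\<eta> > 0 \<Longrightarrow> \<exists>\<delta>>0. \<forall>s\<in>{0..1}. \<forall>z\<in>W. \<forall>w\<in>W. dist z w < \<delta> \<longrightarrow> dist (F s z) (F s w) < \<eta>"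
proof -
  assume "\<eta> > 0"
  then obtain d where d: "d > 0" "\<forall>x\<in>{0..1} \<times> W. \<forall>x'\<in>{0..1} \<times> W. dist x' x < d \<longrightarrow>
      dist ((\<lambda>(t, z). F t z) x') ((\<lambda>(t, z). F t z) x) < \<eta>"
    using uc0 unfolding uniformly_continuous_on_def by blast
  show ?thesis
  proof (intro exI[of _ d] conjI ballI impI)
    fix s :: real and z w assume "s \<in> {0..1}" "z \<in> W" "w \<in> W" "dist z w < d"
    then show "dist (F s z) (F s w) < \<eta>"
      using d(2)[rule_format, of "(s,w)" "(s,z)"] by (simp add: dist_Pair_Pair)
  qed (use d in auto)
qed


lemma fixed_in_G: "fixed_point F x \<Longrightarrow> x \<in> G"
proof -
  assume fx: "fixed_point F x"
  have inv: "invariant F (insert x G)"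
    unfolding invariant_def
  proof (intro allI impI)
    fix t :: real assume "t \<ge> 0"
    then have "F t ` G = G" using ga unfolding global_attractor_def invariant_def by blast
    then show "F t ` insert x G = insert x G" using fx \<open>t \<ge> 0\<close> unfolding fixed_point_def by auto
  qed
  have "compact (insert x G)" using Gcompact by auto
  then have "insert x G = G" using ga inv unfolding global_attractor_def by blast
  then show ?thesis by blast
qed

lemma nbhd_tri: "z \<in> nbhd a G \<Longrightarrow> dist w z < b \<Longrightarrow> w \<in> nbhd (a + b) G"
proof -
  assume "z \<in> nbhd a G" "dist w z < b"
  then obtain g where "g \<in> G" "dist z g < a" unfolding nbhd_def by auto
  then have "dist w g < a + b" using dist_triangle[of w g z] \<open>dist w z < b\<close> by linarith
  then show ?thesis unfolding nbhd_def using \<open>g \<in> G\<close> by auto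
qed

lemma nbhd_tri': "z \<in> nbhd a G \<Longrightarrow> dist z w < b \<Longrightarrow> w \<in> nbhd (a + b) G"
  using nbhd_tri by (simp add: dist_commute)

lemma attr_nbhd: "\<eta> > 0 \<Longrightarrow> \<exists>T>0. \<forall>t\<ge>T. \<forall>z\<in>nbhd e0 G. F t z \<in> nbhd \<eta> G"
  using att0 unfolding attracts_def by blast

lemma attr_pt: "\<eta> > 0 \<Longrightarrow> \<exists>T>0. \<forall>t\<ge>T. F t x \<in> nbhd \<eta> G"
proof -
  assume "\<eta> > 0"
  have "attracts F G {x}" using ga unfolding global_attractor_def by auto
  then show ?thesis using \<open>\<eta> > 0\<close> unfolding attracts_def by blast
qed

lemma in_G_approx: "(\<And>\<eta>. \<eta> > 0 \<Longrightarrow> x \<in> nbhd \<eta> G) \<Longrightarrow> x \<in> G"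
proof -
  assume h: "\<And>\<eta>. \<eta> > 0 \<Longrightarrow> x \<in> nbhd \<eta> G"
  have "closed G" using Gcompact compact_imp_closed by blast
  moreover have "\<exists>y\<in>G. dist y x < e" if epos: "e > 0" for e
  proof -
    obtain g where "g \<in> G" "dist x g < e" using h[of e] epos unfolding nbhd_def by auto
    then show ?thesis by (auto simp: dist_commute)
  qed
  ultimately show ?thesis using closed_approachable[of G x] by blast
qed

lemma conley_in_G: "conley_le F y x \<Longrightarrow> x \<in> G"
proof (rule in_G_approx)
  fix \<eta> :: real assume "\<eta> > 0" "conley_le F y x"
  define e where "e = min \<eta> e0 / 2"
  have e: "e > 0" "2 * e \<le> e0" "2 * e \<le> \<eta>" using \<open>\<eta> > 0\<close> e0pos unfolding e_def by auto
  obtain T1 where T1: "T1 > 0" "\<forall>t\<ge>T1. \<forall>z\<in>nbhd e0 G. F t z \<in> nbhd e G" using attr_nbhd e by blast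
  obtain T0 where T0: "T0 > 0" "\<forall>t\<ge>T0. F t y \<in> nbhd e G" using attr_pt e by blast
  have "conley_chain F e (max T0 T1) y x" using \<open>conley_le F y x\<close> e T0 unfolding conley_le_def
    by (simp add: less_max_iff_disj)
  then obtain N xs ts where ch: "N \<ge> 1" "xs 0 = y" "xs N = x"
    "\<forall>i<N. ts i \<ge> max T0 T1 \<and> dist (F (ts i) (xs i)) (xs (Suc i)) < e"
    unfolding conley_chain_def by blast
  have "xs (Suc i) \<in> nbhd (e + e) G" if "Suc i \<le> N" for i
    using that
  proof (induction i)
    case 0
    then have "F (ts 0) (xs 0) \<in> nbhd e G" using ch T0 by auto
    moreover have "dist (F (ts 0) (xs 0)) (xs (Suc 0)) < e" using ch(4) 0 by auto
    ultimately show ?case using nbhd_tri' by blast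
  next
    case (Suc i)
    then have "xs (Suc i) \<in> nbhd e0 G" using nbhd_mono[of "e+e" e0] e by auto
    then have "F (ts (Suc i)) (xs (Suc i)) \<in> nbhd e G" using ch(4) Suc.prems T1 by auto
    moreover have "dist (F (ts (Suc i)) (xs (Suc i))) (xs (Suc (Suc i))) < e" using ch(4) Suc.prems by auto
    ultimately show ?case using nbhd_tri' by blast
  qed
  moreover obtain k where "N = Suc k" using ch(1) by (cases N) auto
  ultimately have "xs N \<in> nbhd (e + e) G" by auto
  then show "x \<in> nbhd \<eta> G" using ch(3) nbhd_mono[of "e+e" \<eta>] e by auto
qed


lemma conley_shadow: assumes "x \<in> G" "conley_le F x y" shows "shadow_le F x y"
  unfolding shadow_le_def
proof (intro allI impI)
  fix \<epsilon> :: real assume "\<epsilon> > 0"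
  obtain \<delta> where \<delta>: "\<delta> > 0" "\<forall>s\<in>{0..1}. \<forall>z\<in>W. \<forall>w\<in>W. dist z w < \<delta> \<longrightarrow> dist (F s z) (F s w) < \<epsilon>"
    using UC[OF \<open>\<epsilon> > 0\<close>] by blast
  have e2: "e0 / 2 > 0" using e0pos by simp
  obtain T1 where T1: "T1 > 0" "\<forall>t\<ge>T1. \<forall>z\<in>nbhd e0 G. F t z \<in> nbhd (e0/2) G"
    using attr_nbhd[OF e2] by blast
  define e where "e = min \<delta> (e0/2)"
  have e: "e > 0" "e \<le> \<delta>" "e \<le> e0/2" unfolding e_def using \<delta> e0pos by auto
  have "conley_chain F e (max 1 T1) x y" using assms(2) e unfolding conley_le_def
    by (simp add: less_max_iff_disj)
  then obtain N xs ts where ch: "N \<ge> 1" "xs 0 = x" "xs N = y"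
    "\<forall>i<N. ts i \<ge> max 1 T1 \<and> dist (F (ts i) (xs i)) (xs (Suc i)) < e"
    unfolding conley_chain_def by blast
  have inG: "xs i \<in> nbhd e0 G" if "i \<le> N" for i
    using that
  proof (induction i)
    case 0 then show ?case using assms(1) ch(2) G_nbhd e0pos by auto
  next
    case (Suc i)
    then have "F (ts i) (xs i) \<in> nbhd (e0/2) G" using T1 ch(4) by auto
    moreover have "dist (F (ts i) (xs i)) (xs (Suc i)) < e" using ch(4) Suc.prems by simp
    then have "dist (F (ts i) (xs i)) (xs (Suc i)) < e0/2" using e by linarith
    ultimately have "xs (Suc i) \<in> nbhd (e0/2 + e0/2) G" using nbhd_tri' by blast
    then show ?case by simp
  qed
  have "shadow_chain F \<epsilon> (xs 0) (xs N)"
  proof (rule conley_to_shadow[OF ch(1)])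
    fix i assume "i < N" then show "ts i \<ge> 1" using ch(4) by auto
  next
    fix i and r :: real assume i: "i < N" and r: "0 \<le> r" "r \<le> 1"
    have a: "xs (Suc i) \<in> W" using inG[of "Suc i"] i nbhd_W by auto
    have "ts i \<ge> 0" using ch(4) i by force
    then have b: "F (ts i) (xs i) \<in> W" using inG[of i] i nbhd_W W_fwd by auto
    have "dist (xs (Suc i)) (F (ts i) (xs i)) < \<delta>" using ch(4) i e by (force simp: dist_commute)
    then show "dist (F r (xs (Suc i))) (F r (F (ts i) (xs i))) < \<epsilon>" using \<delta>(2) a b r by auto
  qed
  then show "shadow_chain F \<epsilon> x y" using ch by simp
qed


lemma UCn: "\<eta> > 0 \<Longrightarrow> \<exists>\<delta>>0. \<forall>t\<in>{0..real n}. \<forall>z\<in>W. \<forall>w\<in>W. dist z w < \<delta> \<longrightarrow> dist (F t z) (F t w) < \<eta>"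
proof (induction n arbitrary: \<eta>)
  case 0
  then show ?case by (intro exI[of _ \<eta>]) auto
next
  case (Suc n)
  obtain \<delta>1 where d1: "\<delta>1 > 0" "\<forall>t\<in>{0..real n}. \<forall>z\<in>W. \<forall>w\<in>W. dist z w < \<delta>1 \<longrightarrow> dist (F t z) (F t w) < \<eta>"
    using Suc by blast
  obtain \<delta>2 where d2: "\<delta>2 > 0" "\<forall>s\<in>{0..1}. \<forall>z\<in>W. \<forall>w\<in>W. dist z w < \<delta>2 \<longrightarrow> dist (F s z) (F s w) < \<delta>1"
    using UC[OF d1(1)] by blast
  obtain \<delta>3 where d3: "\<delta>3 > 0" "\<forall>s\<in>{0..1}. \<forall>z\<in>W. \<forall>w\<in>W. dist z w < \<delta>3 \<longrightarrow> dist (F s z) (F s w) < \<eta>"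
    using UC[OF Suc.prems] by blast
  show ?case
  proof (intro exI[of _ "min \<delta>2 \<delta>3"] conjI ballI impI)
    show "min \<delta>2 \<delta>3 > 0" using d2 d3 by simp
    fix t z w assume t: "t \<in> {0..real (Suc n)}" and zw: "z \<in> W" "w \<in> W" "dist z w < min \<delta>2 \<delta>3"
    show "dist (F t z) (F t w) < \<eta>"
    proof (cases "t \<le> 1")
      case True then show ?thesis using d3(2) t zw by auto
    next
      case False
      have "F t z = F (t - 1) (F 1 z)" "F t w = F (t - 1) (F 1 w)" using Fadd[of "t - 1" 1] False by auto
      moreover have "dist (F 1 z) (F 1 w) < \<delta>1" using d2(2) zw by auto
      moreover have "F 1 z \<in> W" "F 1 w \<in> W" using W_fwd zw by auto
      moreover have "t - 1 \<in> {0..real n}" using t False by auto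
      ultimately show ?thesis using d1(2) by auto
    qed
  qed
qed

lemma STAB: "\<eta> > 0 \<Longrightarrow> \<exists>\<delta>>0. \<forall>t\<ge>0. \<forall>z\<in>nbhd \<delta> G. F t z \<in> nbhd \<eta> G"
proof -
  assume "\<eta> > 0"
  obtain T where T: "T > 0" "\<forall>t\<ge>T. \<forall>z\<in>nbhd e0 G. F t z \<in> nbhd \<eta> G" using attr_nbhd[OF \<open>\<eta> > 0\<close>] by blast
  obtain \<delta>1 where d1: "\<delta>1 > 0" "\<forall>t\<in>{0..real (nat \<lceil>T\<rceil>)}. \<forall>z\<in>W. \<forall>w\<in>W. dist z w < \<delta>1 \<longrightarrow> dist (F t z) (F t w) < \<eta>"
    using UCn[OF \<open>\<eta> > 0\<close>] by blast
  show ?thesis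
  proof (intro exI[of _ "min \<delta>1 e0"] conjI allI impI ballI)
    show "min \<delta>1 e0 > 0" using d1 e0pos by simp
    fix t :: real and z assume t: "t \<ge> 0" and z: "z \<in> nbhd (min \<delta>1 e0) G"
    have zW: "z \<in> nbhd e0 G" using z nbhd_mono[of "min \<delta>1 e0" e0] by auto
    show "F t z \<in> nbhd \<eta> G"
    proof (cases "t \<ge> T")
      case True then show ?thesis using T zW by auto
    next
      case False
      obtain g where g: "g \<in> G" "dist z g < min \<delta>1 e0" using z unfolding nbhd_def by auto
      have "g \<in> W" using g G_nbhd[OF e0pos] nbhd_W by auto
      moreover have "z \<in> W" using zW nbhd_W by auto
      moreover have "t \<in> {0..real (nat \<lceil>T\<rceil>)}" 
      proof -
        have "T \<le> of_int \<lceil>T\<rceil>" by (rule le_of_int_ceiling)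
        then have "t \<le> of_int \<lceil>T\<rceil>" using False by linarith
        then show ?thesis using t by auto
      qed
      ultimately have "dist (F t z) (F t g) < \<eta>" using d1(2) g by auto
      moreover have "F t g \<in> G" using Ginv t g by auto
      ultimately show ?thesis unfolding nbhd_def by auto
    qed
  qed
qed


lemma SC: assumes long: "\<And>\<epsilon> L. \<epsilon> > 0 \<Longrightarrow> dchain F \<epsilon> x y L" shows "conley_le F x y"
  unfolding conley_le_def
proof (intro allI impI)
  fix \<epsilon> T :: real assume epos: "\<epsilon> > 0" and Tpos: "T > 0"
  have e02: "e0/2 > 0" using e0pos by simp
  obtain \<delta>1 where d1: "\<delta>1 > 0" "\<forall>t\<ge>0. \<forall>z\<in>nbhd \<delta>1 G. F t z \<in> nbhd (e0/2) G"
    using STAB[OF e02] by blast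
  define d where "d = min \<delta>1 e0"
  have d: "d > 0" "d \<le> e0" "\<And>t z. t \<ge> 0 \<Longrightarrow> z \<in> nbhd d G \<Longrightarrow> F t z \<in> nbhd (e0/2) G"
  proof -
    show "d > 0" "d \<le> e0" unfolding d_def using d1 e0pos by auto
    fix t :: real and z assume "t \<ge> 0" "z \<in> nbhd d G"
    then show "F t z \<in> nbhd (e0/2) G" using d1(2) nbhd_mono[of d \<delta>1 G] unfolding d_def by auto
  qed
  have d2: "d/2 > 0" using d by simp
  obtain Ta where Ta: "Ta > 0" "\<forall>t\<ge>Ta. \<forall>z\<in>nbhd e0 G. F t z \<in> nbhd (d/2) G"
    using attr_nbhd[OF d2] by blast
  obtain Tx where Tx: "Tx > 0" "\<forall>t\<ge>Tx. F t x \<in> nbhd (d/2) G"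
    using attr_pt[OF d2] by blast
  define q where "q = nat \<lceil>2 * (T + Ta + Tx)\<rceil> + 1"
  have q: "real q / 2 \<ge> T" "real q / 2 \<ge> Ta" "real q / 2 \<ge> Tx" "q \<ge> 1"
  proof -
    have "2 * (T + Ta + Tx) \<le> real (nat \<lceil>2 * (T + Ta + Tx)\<rceil>)" by (rule real_nat_ceiling_ge)
    then have "2 * (T + Ta + Tx) \<le> real q" unfolding q_def by simp
    then show "real q / 2 \<ge> T" using Tpos Ta(1) Tx(1) by (simp add: field_simps)
    from \<open>2 * (T + Ta + Tx) \<le> real q\<close> show "real q / 2 \<ge> Ta" using Tpos Ta(1) Tx(1) by (simp add: field_simps)
    from \<open>2 * (T + Ta + Tx) \<le> real q\<close> show "real q / 2 \<ge> Tx" using Tpos Ta(1) Tx(1) by (simp add: field_simps)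
    show "q \<ge> 1" unfolding q_def by simp
  qed
  define M where "M = 2 * q"
  define \<tau> where "\<tau> = min \<epsilon> (min (d/2) (e0/2))"
  have \<tau>: "\<tau> > 0" "\<tau> \<le> \<epsilon>" "\<tau> \<le> d/2" "\<tau> \<le> e0/2" unfolding \<tau>_def using epos d e0pos by auto
  have mdW: "\<exists>\<delta>>0. \<forall>a\<in>{0..1}. \<forall>z w. z \<in> W \<longrightarrow> w \<in> W \<longrightarrow> dist z w < \<delta> \<longrightarrow> dist (F a z) (F a w) < t"
    if "t > 0" for t
    using UC[OF that] by blast
  obtain \<delta>W where dW: "\<delta>W > 0" "\<forall>m\<le>M. \<forall>p s. (\<forall>i<m. s i \<in> {0..1} \<and> dist (F (s i) (p i)) (p (Suc i)) < \<delta>W \<and>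
      p i \<in> W \<and> F (\<Sum>k<i. s k) (p 0) \<in> W) \<longrightarrow> dist (p m) (F (\<Sum>k<m. s k) (p 0)) < \<tau>"
    using track_le[where A="\<lambda>z. z \<in> W" and B="\<lambda>z. z \<in> W", OF mdW \<tau>(1)] by blast
  define K where "K = (\<lambda>t. F t x) ` {0..real M}"
  have cK: "compact K" unfolding K_def
    by (rule compact_continuous_image[OF continuous_on_subset[OF cont_t]]) auto
  have mdK: "\<exists>\<delta>>0. \<forall>a\<in>{0..1}. \<forall>z w. True \<longrightarrow> w \<in> K \<longrightarrow> dist z w < \<delta> \<longrightarrow> dist (F a z) (F a w) < t"
    if "t > 0" for t
    using UCK[OF cK that] by blast
  obtain \<delta>K where dK: "\<delta>K > 0" "\<forall>m\<le>M. \<forall>p s. (\<forall>i<m. s i \<in> {0..1} \<and> dist (F (s i) (p i)) (p (Suc i)) < \<delta>K \<and>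
      True \<and> F (\<Sum>k<i. s k) (p 0) \<in> K) \<longrightarrow> dist (p m) (F (\<Sum>k<m. s k) (p 0)) < \<tau>"
    using track_le[where A="\<lambda>z. True" and B="\<lambda>z. z \<in> K", OF mdK \<tau>(1)] by blast
  define \<delta> where "\<delta> = min \<delta>W \<delta>K"
  have \<delta>: "\<delta> > 0" "\<delta> \<le> \<delta>W" "\<delta> \<le> \<delta>K" unfolding \<delta>_def using dW dK by auto
  obtain n p s where ch: "n \<ge> 1" "2 * q \<le> n" "p 0 = x" "p n = y"
    "\<forall>i<n. s i \<in> {1/2..1} \<and> dist (F (s i) (p i)) (p (Suc i)) < \<delta>"
    using long[OF \<delta>(1), of "2 * q"] unfolding dchain_def by blast
  have sb: "0 \<le> s i" "s i \<le> 1" "1/2 \<le> s i" if "i < n" for i using ch(5) that by auto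
  have sumge: "(\<Sum>k<l. s (a + k)) \<ge> real l / 2" if "a + l \<le> n" for a l
  proof -
    have "of_nat (card {..<l}) * (1/2) \<le> (\<Sum>k<l. s (a + k))"
      by (rule sum_bounded_below) (use sb that in auto)
    then show ?thesis by simp
  qed
  have sumle: "(\<Sum>k<l. s (a + k)) \<le> real l" if "a + l \<le> n" for a l
  proof -
    have "(\<Sum>k<l. s (a + k)) \<le> of_nat (card {..<l}) * 1"
      by (rule sum_bounded_above) (use sb that in auto)
    then show ?thesis by simp
  qed
  have sumnn: "(\<Sum>k<l. s (a + k)) \<ge> 0" if "a + l \<le> n" for a l
    using sumge[OF that] by (smt (verit) of_nat_0_le_iff divide_nonneg_pos)
  have blk: "(\<forall>i\<le>l. p (a + i) \<in> nbhd e0 G) \<and> dist (p (a + l)) (F (\<Sum>k<l. s (a + k)) (p a)) < \<tau>"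
    if "l \<le> M" "a + l \<le> n" "p a \<in> nbhd d G" for a l
    using that
  proof (induction l)
    case 0
    then show ?case using nbhd_mono[of d e0 G] d \<tau> by auto
  next
    case (Suc l)
    then have IH: "\<forall>i\<le>l. p (a + i) \<in> nbhd e0 G" by simp
    have paW: "p a \<in> W" using Suc.prems(3) nbhd_W' d(2) by blast
    have "dist ((\<lambda>i. p (a + i)) (Suc l)) (F (\<Sum>k<Suc l. (\<lambda>i. s (a + i)) k) ((\<lambda>i. p (a + i)) 0)) < \<tau>"
    proof (rule dW(2)[rule_format, OF Suc.prems(1)])
      fix i assume i: "i < Suc l"
      have "s (a + i) \<in> {0..1}" using sb[of "a + i"] i Suc.prems by auto
      moreover have "dist (F (s (a + i)) (p (a + i))) (p (Suc (a + i))) < \<delta>W"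
        using ch(5) i Suc.prems \<delta> by (metis add_Suc_right add_less_cancel_left less_le_trans order_less_le_trans)
      moreover have "p (a + i) \<in> W" using IH i nbhd_W by auto
      moreover have "F (\<Sum>k<i. s (a + k)) (p a) \<in> W"
        using W_fwd[OF paW] sumnn[of a i] i Suc.prems by auto
      ultimately show "(\<lambda>i. s (a + i)) i \<in> {0..1} \<and>
          dist (F ((\<lambda>i. s (a + i)) i) ((\<lambda>i. p (a + i)) i)) ((\<lambda>i. p (a + i)) (Suc i)) < \<delta>W \<and>
          (\<lambda>i. p (a + i)) i \<in> W \<and> F (\<Sum>k<i. (\<lambda>i. s (a + i)) k) ((\<lambda>i. p (a + i)) 0) \<in> W"
        by simp
    qed
    then have dd: "dist (p (a + Suc l)) (F (\<Sum>k<Suc l. s (a + k)) (p a)) < \<tau>" by simp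
    have "F (\<Sum>k<Suc l. s (a + k)) (p a) \<in> nbhd (e0/2) G"
      using d(3)[OF sumnn[of a "Suc l"] Suc.prems(3)] Suc.prems(2) by simp
    then have "p (a + Suc l) \<in> nbhd (e0/2 + \<tau>) G" using dd nbhd_tri by blast
    then have "p (a + Suc l) \<in> nbhd e0 G" using nbhd_mono[of "e0/2 + \<tau>" e0 G] \<tau> by auto
    then have "\<forall>i\<le>Suc l. p (a + i) \<in> nbhd e0 G" using IH le_Suc_eq by auto
    then show ?case using dd by simp
  qed
  define m where "m = n div q"
  have qpos: "q > 0" using q by simp
  have mq: "m * q \<le> n" "n < m * q + q" unfolding m_def
    using div_times_less_eq_dividend[of n q] mod_less_divisor[OF qpos, of n] div_mult_mod_eq[of n q]
    by linarith+
  have m2: "m \<ge> 2"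
  proof (rule ccontr)
    assume "\<not> m \<ge> 2"
    then have "m \<le> 1" by simp
    then have "m * q + q \<le> 2 * q" by simp
    then show False using mq ch(2) by linarith
  qed
  define b where "b j = (if j < m then j * q else n)" for j
  define len where "len j = b (Suc j) - b j" for j
  define ts where "ts j = (\<Sum>k<len j. s (b j + k))" for j
  have blen: "b j + len j = b (Suc j)" "q \<le> len j" "len j \<le> M" "b (Suc j) \<le> n" if "j < m" for j
  proof -
    have bj: "b j = j * q" using that unfolding b_def by simp
    have "b (Suc j) = j * q + q \<and> j * q + q \<le> n \<or> (b (Suc j) = n \<and> j * q + q \<le> n \<and> n < j * q + 2 * q)"
    proof (cases "Suc j < m")
      case True
      then have "Suc j * q \<le> m * q" by (intro mult_right_mono) auto
      then show ?thesis using True mq unfolding b_def by auto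
    next
      case False
      then have "m = Suc j" using that by simp
      then show ?thesis using mq unfolding b_def by auto
    qed
    then show "b j + len j = b (Suc j)" "q \<le> len j" "len j \<le> M" "b (Suc j) \<le> n"
      unfolding len_def M_def bj by auto
  qed
  have tsq: "ts j \<ge> real q / 2" if "j < m" for j
  proof -
    have "ts j \<ge> real (len j) / 2" unfolding ts_def using sumge blen[OF that] by simp
    moreover have "real (len j) \<ge> real q" using blen[OF that] by simp
    ultimately show ?thesis by linarith
  qed
  have tsT: "ts j \<ge> T" if "j < m" for j using tsq[OF that] q(1) by linarith
  have tsnn: "ts j \<ge> 0" if "j < m" for j using tsT[OF that] Tpos by simp
  have b0: "b 0 = 0" "b 1 = q" using m2 unfolding b_def by auto
  have len0: "len 0 = q" unfolding len_def using b0 by simp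
  have first: "dist (p q) (F (ts 0) x) < \<tau>"
  proof -
    have qM: "q \<le> M" unfolding M_def by simp
    have "dist (p q) (F (\<Sum>k<q. s k) (p 0)) < \<tau>"
    proof (rule dK(2)[rule_format, OF qM])
      fix i assume i: "i < q"
      have iN: "i < n" using i ch(2) by simp
      have "s i \<in> {0..1}" using sb[OF iN] by auto
      moreover have "dist (F (s i) (p i)) (p (Suc i)) < \<delta>K" using ch(5) iN \<delta> by force
      moreover have "F (\<Sum>k<i. s k) (p 0) \<in> K"
      proof -
        have "(\<Sum>k<i. s (0 + k)) \<le> real i" "(\<Sum>k<i. s (0 + k)) \<ge> 0" using sumle[of 0 i] sumnn[of 0 i] iN by auto
        moreover have "real i \<le> real M" using i unfolding M_def by simp
        ultimately show ?thesis unfolding K_def using ch(3) by auto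
      qed
      ultimately show "s i \<in> {0..1} \<and> dist (F (s i) (p i)) (p (Suc i)) < \<delta>K \<and> True \<and> F (\<Sum>k<i. s k) (p 0) \<in> K"
        by simp
    qed
    moreover have "ts 0 = (\<Sum>k<q. s k)" unfolding ts_def using len0 b0 by simp
    ultimately show ?thesis using ch(3) by simp
  qed
  have pq: "p q \<in> nbhd d G"
  proof -
    have "ts 0 \<ge> Tx" using tsq[of 0] m2 q(3) by simp
    then have "F (ts 0) x \<in> nbhd (d/2) G" using Tx by auto
    then have "p q \<in> nbhd (d/2 + \<tau>) G" using first nbhd_tri by blast
    then show ?thesis using nbhd_mono[of "d/2 + \<tau>" d G] \<tau> by auto
  qed
  have later: "dist (p (b (Suc j))) (F (ts j) (p (b j))) < \<tau>" if "j < m" "p (b j) \<in> nbhd d G" for j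
  proof -
    have "dist (p (b j + len j)) (F (\<Sum>k<len j. s (b j + k)) (p (b j))) < \<tau>"
      using blk[of "len j" "b j"] blen[OF that(1)] that(2) by auto
    then show ?thesis using blen[OF that(1)] unfolding ts_def by simp
  qed
  have inv: "p (b j) \<in> nbhd d G" if "1 \<le> j" "j \<le> m" for j
    using that
  proof (induction j)
    case 0 then show ?case by simp
  next
    case (Suc j)
    show ?case
    proof (cases "j = 0")
      case True then show ?thesis using pq b0 by simp
    next
      case False
      then have jm: "j < m" and pj: "p (b j) \<in> nbhd d G" using Suc by auto
      have "F (ts j) (p (b j)) \<in> nbhd (d/2) G"
      proof -
        have "ts j \<ge> Ta" using tsq[OF jm] q(2) by linarith
        moreover have "p (b j) \<in> nbhd e0 G" using pj nbhd_mono[of d e0 G] d by auto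
        ultimately show ?thesis using Ta(2) by auto
      qed
      then have "p (b (Suc j)) \<in> nbhd (d/2 + \<tau>) G" using later[OF jm pj] nbhd_tri by blast
      then show ?thesis using nbhd_mono[of "d/2 + \<tau>" d G] \<tau> by auto
    qed
  qed
  show "conley_chain F \<epsilon> T x y"
    unfolding conley_chain_def
  proof (intro exI[of _ m] exI[of _ "\<lambda>j. p (b j)"] exI[of _ ts] conjI allI impI)
    show "1 \<le> m" using m2 by simp
    show "p (b 0) = x" using b0 ch(3) by simp
    show "p (b m) = y" unfolding b_def using ch(4) by simp
    fix j assume j: "j < m"
    show "T \<le> ts j" using tsT[OF j] .
    show "dist (F (ts j) (p (b j))) (p (b (Suc j))) < \<epsilon>"
    proof (cases "j = 0")
      case True then show ?thesis using first b0 \<tau> ch(3) by (simp add: dist_commute)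
    next
      case False
      then have "p (b j) \<in> nbhd d G" using inv j by simp
      then show ?thesis using later[OF j] \<tau> by (simp add: dist_commute)
    qed
  qed
qed


lemma RC_G: "x \<in> chain_recurrent_set F (conley_le F) \<Longrightarrow> x \<in> G"
  unfolding chain_recurrent_set_def using fixed_in_G conley_in_G by blast

lemma RC_RS: "x \<in> chain_recurrent_set F (conley_le F) \<Longrightarrow> x \<in> chain_recurrent_set F (shadow_le F)"
proof -
  assume x: "x \<in> chain_recurrent_set F (conley_le F)"
  show ?thesis
  proof (cases "fixed_point F x")
    case True then show ?thesis unfolding chain_recurrent_set_def by simp
  next
    case False
    then obtain y where y: "conley_le F x y" "conley_le F y x" using x unfolding chain_recurrent_set_def by blast
    have "x \<in> G" "y \<in> G" using conley_in_G y by blast+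
    then have "shadow_le F x y" "shadow_le F y x" using conley_shadow y by blast+
    then show ?thesis unfolding chain_recurrent_set_def by blast
  qed
qed

lemma RS_conley: "x \<in> chain_recurrent_set F (shadow_le F) \<Longrightarrow> shadow_le F x y \<Longrightarrow> conley_le F x y"
  using SC RS_long by blast

lemma RS_RC: "x \<in> chain_recurrent_set F (shadow_le F) \<Longrightarrow> x \<in> chain_recurrent_set F (conley_le F)"
proof -
  assume x: "x \<in> chain_recurrent_set F (shadow_le F)"
  show ?thesis
  proof (cases "fixed_point F x")
    case True then show ?thesis unfolding chain_recurrent_set_def by simp
  next
    case False
    then obtain y where y: "shadow_le F x y" "shadow_le F y x" using x unfolding chain_recurrent_set_def by blast
    have yR: "y \<in> chain_recurrent_set F (shadow_le F)" using y unfolding chain_recurrent_set_def by blast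
    have "conley_le F x y" using RS_conley[OF x y(1)] .
    moreover have "conley_le F y x" using RS_conley[OF yR y(2)] .
    ultimately show ?thesis unfolding chain_recurrent_set_def by blast
  qed
qed

lemma R_eq: "chain_recurrent_set F (conley_le F) = chain_recurrent_set F (shadow_le F)"
  using RC_RS RS_RC by blast

lemma rel_eq: "x \<in> chain_recurrent_set F (conley_le F) \<Longrightarrow> y \<in> chain_recurrent_set F (conley_le F) \<Longrightarrow>
    conley_le F x y \<longleftrightarrow> shadow_le F x y"
  using conley_shadow RC_G RS_conley RC_RS by blast

end

lemma mutual_eq:
  assumes "M \<subseteq> R" "\<forall>x\<in>R. \<forall>y\<in>R. r1 x y \<longleftrightarrow> r2 x y"
  shows "mutually_equiv r1 M \<longleftrightarrow> mutually_equiv r2 M"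
  using assms unfolding mutually_equiv_def by blast

lemma node_eq:
  assumes R: "chain_recurrent_set F r1 = chain_recurrent_set F r2"
    and rel: "\<forall>x\<in>chain_recurrent_set F r1. \<forall>y\<in>chain_recurrent_set F r1. r1 x y \<longleftrightarrow> r2 x y"
  shows "is_node F r1 M \<longleftrightarrow> is_node F r2 M"
proof -
  have me: "M' \<subseteq> chain_recurrent_set F r1 \<Longrightarrow> mutually_equiv r1 M' \<longleftrightarrow> mutually_equiv r2 M'" for M'
    using mutual_eq[OF _ rel] by blast
  show ?thesis unfolding is_node_def R[symmetric] using me by blast
qed

lemma graph_eq:
  assumes R: "chain_recurrent_set F r1 = chain_recurrent_set F r2"
    and rel: "\<forall>x\<in>chain_recurrent_set F r1. \<forall>y\<in>chain_recurrent_set F r1. r1 x y \<longleftrightarrow> r2 x y"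
  shows "chain_graph F r1 = chain_graph F r2"
proof -
  have ne: "is_node F r1 M \<longleftrightarrow> is_node F r2 M" for M using node_eq[OF R rel] .
  have sub: "is_node F r1 M \<Longrightarrow> M \<subseteq> chain_recurrent_set F r1" for M unfolding is_node_def by blast
  have ed: "(\<exists>x\<in>M. \<exists>y\<in>N. r1 x y) \<longleftrightarrow> (\<exists>x\<in>M. \<exists>y\<in>N. r2 x y)" if "is_node F r1 M" "is_node F r1 N" for M N
    using sub[OF that(1)] sub[OF that(2)] rel by blast
  have "{(M, N). is_node F r1 M \<and> is_node F r1 N \<and> (\<exists>x\<in>M. \<exists>y\<in>N. r1 x y)} =
        {(M, N). is_node F r2 M \<and> is_node F r2 N \<and> (\<exists>x\<in>M. \<exists>y\<in>N. r2 x y)}"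
  proof (intro set_eqI iffI)
    fix z assume "z \<in> {(M, N). is_node F r1 M \<and> is_node F r1 N \<and> (\<exists>x\<in>M. \<exists>y\<in>N. r1 x y)}"
    moreover obtain M N where z: "z = (M, N)" by (cases z)
    ultimately have h: "is_node F r1 M" "is_node F r1 N" "\<exists>x\<in>M. \<exists>y\<in>N. r1 x y" by auto
    then have "\<exists>x\<in>M. \<exists>y\<in>N. r2 x y" using ed[OF h(1,2)] by blast
    then show "z \<in> {(M, N). is_node F r2 M \<and> is_node F r2 N \<and> (\<exists>x\<in>M. \<exists>y\<in>N. r2 x y)}"
      using h ne z by simp
  next
    fix z assume "z \<in> {(M, N). is_node F r2 M \<and> is_node F r2 N \<and> (\<exists>x\<in>M. \<exists>y\<in>N. r2 x y)}"
    moreover obtain M N where z: "z = (M, N)" by (cases z)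
    ultimately have h: "is_node F r2 M" "is_node F r2 N" "\<exists>x\<in>M. \<exists>y\<in>N. r2 x y" by auto
    then have h1: "is_node F r1 M" "is_node F r1 N" using ne by auto
    then have "\<exists>x\<in>M. \<exists>y\<in>N. r1 x y" using ed[OF h1] h(3) by blast
    then show "z \<in> {(M, N). is_node F r1 M \<and> is_node F r1 N \<and> (\<exists>x\<in>M. \<exists>y\<in>N. r1 x y)}"
      using h1 z by simp
  qed
  moreover have "{M. is_node F r1 M} = {M. is_node F r2 M}" using ne by blast
  ultimately show ?thesis unfolding chain_graph_def by simp
qed

theorem mainTheorem1:
  fixes F :: "real \<Rightarrow> 'a::metric_space \<Rightarrow> 'a"
  assumes "semiflow F" and "strong_compact_dynamics F"
  shows "chain_recurrent_set F (conley_le F) = chain_recurrent_set F (shadow_le F)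
    \<and> (\<forall>x\<in>chain_recurrent_set F (conley_le F). \<forall>y\<in>chain_recurrent_set F (conley_le F).
          conley_le F x y \<longleftrightarrow> shadow_le F x y)
    \<and> (\<forall>M. is_node F (conley_le F) M \<longleftrightarrow> is_node F (shadow_le F) M)
    \<and> chain_graph F (conley_le F) = chain_graph F (shadow_le F)"
proof -
  obtain G where "strong_global_attractor F G" using assms(2) unfolding strong_compact_dynamics_def by blast
  then obtain e where e: "global_attractor F G" "e > 0" "attracts F G (nbhd e G)"
    "uniformly_continuous_on ({0..1} \<times> W_set F e G) (\<lambda>(t, z). F t z)"
    unfolding strong_global_attractor_def by blast
  interpret sca F G e
    by (unfold_locales) (use assms(1) e in auto)
  have R: "chain_recurrent_set F (conley_le F) = chain_recurrent_set F (shadow_le F)" by (rule R_eq)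
  have rel: "\<forall>x\<in>chain_recurrent_set F (conley_le F). \<forall>y\<in>chain_recurrent_set F (conley_le F).
          conley_le F x y \<longleftrightarrow> shadow_le F x y" using rel_eq by blast
  show ?thesis using R rel node_eq[OF R rel] graph_eq[OF R rel] by blast
qed

end
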